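(* Let $\mathbf{p}=\langle x_1,y_1,r_1,\dots,x_n,y_n,r_n\rangle$ be a packing of a planar embedded graph $G=(V,E)$, with vertex set partitioned as $V=V^+\sqcup V^-\sqcup V^=\sqcup V^0$. Suppose there exists an equilibrium stress $\omega:E\to\mathbb{R}$ (i.e. $\sum_{j:(i,j)\in E}\omega_{ij}(\mathbf{p}_i-\mathbf{p}_j)=0$ for every vertex $i$) whose radial force sum $\omega_i=\sum_{j:(i,j)\in E}\omega_{ij}(r_i+r_j)$ is positive for $i\in V^-$, negative for $i\in V^+$, and $0$ for $i\in V^0$. Let $\mathbf{p}'=\langle x_1',y_1',r_1',\dots,x_n',y_n',r_n'\rangle$ be any vector (not required to preserve tangencies) such that for every edge $(i,j)\in E$: (1) if $\omega_{ij}<0$, then $(\mathbf{p}_i-\mathbf{p}_j)\cdot(\mathbf{p}_i'-\mathbf{p}_j')-(r_i+r_j)(r_i'+r_j')\ge 0$ (disks $i$ and $j$ remain tangent or become separated to first order); (2) if $\omega_{ij}>0$, then $(\mathbf{p}_i-\mathbf{p}_j)\cdot(\mathbf{p}_i'-\mathbf{p}_j')-(r_i+r_j)(r_i'+r_j')\le 0$ (disks $i$ and $j$ remain tangent or become overlapped to first order); and (3) $r_k'\ge 0$ for $k\in V^+$, $r_k'\le 0$ for $k\in V^-$, $r_k'=0$ for $k\in V^=$. Then $r_k'=0$ for all $k\in V^+\cup V^-$, and $(\mathbf{p}_i-\mathbf{p}_j)\cdot(\mathbf{p}_i'-\mathbf{p}_j')=(r_i+r_j)(r_i'+r_j')$ for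 every edge $(i,j)$ with $\omega_{ij}\neq 0$ (all such tangencies are preserved to first order).
   Context: A packing of $G$ assigns to each vertex $i$ a disk with center $\mathbf{p}_i=(x_i,y_i)$ and radius $r_i>0$, such that disks joined by an edge are externally tangent, $(r_i+r_j)^2=\|\mathbf{p}_i-\mathbf{p}_j\|^2$. The sets $V^+,V^-,V^=,V^0$ are the disks allowed only to increase (or stay) in radius, only to decrease (or stay), with fixed radius, and free, respectively. *)

theory Defs
  imports "HOL-Analysis.Analysis"
begin

definition simple_graph :: "'v set \<Rightarrow> ('v \<times> 'v) set \<Rightarrow> bool" where
  "simple_graph V E \<longleftrightarrow> finite V \<and> E \<subseteq> V \<times> V \<and>
     (\<forall>i j. (i, j) \<in> E \<longrightarrow> (j, i) \<in> E) \<and> (\<forall>i. (i, i) \<notin> E)"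

definition is_packing :: "'v set \<Rightarrow> ('v \<times> 'v) set \<Rightarrow> ('v \<Rightarrow> real^2) \<Rightarrow> ('v \<Rightarrow> real) \<Rightarrow> bool" where
  "is_packing V E p r \<longleftrightarrow> (\<forall>i\<in>V. r i > 0) \<and>
     (\<forall>(i, j)\<in>E. (r i + r j)\<^sup>2 = (norm (p i - p j))\<^sup>2)"

definition equilibrium_stress :: "'v set \<Rightarrow> ('v \<times> 'v) set \<Rightarrow> ('v \<Rightarrow> real^2) \<Rightarrow> ('v \<Rightarrow> 'v \<Rightarrow> real) \<Rightarrow> bool" where
  "equilibrium_stress V E p \<omega> \<longleftrightarrow> (\<forall>i j. \<omega> i j = \<omega> j i) \<and>
     (\<forall>i\<in>V. (\<Sum>j\<in>{j. (i, j) \<in> E}. \<omega> i j *\<^sub>R (p i - p j)) = 0)"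

definition radial_sum :: "('v \<times> 'v) set \<Rightarrow> ('v \<Rightarrow> real) \<Rightarrow> ('v \<Rightarrow> 'v \<Rightarrow> real) \<Rightarrow> 'v \<Rightarrow> real" where
  "radial_sum E r \<omega> i = (\<Sum>j\<in>{j. (i, j) \<in> E}. \<omega> i j * (r i + r j))"

definition tangency_deriv :: "('v \<Rightarrow> real^2) \<Rightarrow> ('v \<Rightarrow> real) \<Rightarrow> ('v \<Rightarrow> real^2) \<Rightarrow> ('v \<Rightarrow> real) \<Rightarrow> 'v \<Rightarrow> 'v \<Rightarrow> real" where
  "tangency_deriv p r p' r' i j = (p i - p j) \<bullet> (p' i - p' j) - (r i + r j) * (r' i + r' j)"

end

theory Submission
  imports Defs
begin

theorem mainTheorem4:
  fixes V Vplus Vminus Veq Vzero :: "'v set" and E :: "('v \<times> 'v) set"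
    and p p' :: "'v \<Rightarrow> real^2" and r r' :: "'v \<Rightarrow> real" and \<omega> :: "'v \<Rightarrow> 'v \<Rightarrow> real"
  assumes graph: "simple_graph V E"
    and partition: "V = Vplus \<union> Vminus \<union> Veq \<union> Vzero"
      "Vplus \<inter> Vminus = {}" "Vplus \<inter> Veq = {}" "Vplus \<inter> Vzero = {}"
      "Vminus \<inter> Veq = {}" "Vminus \<inter> Vzero = {}" "Veq \<inter> Vzero = {}"
    and packing: "is_packing V E p r"
    and stress: "equilibrium_stress V E p \<omega>"
    and rad_minus: "\<forall>i\<in>Vminus. radial_sum E r \<omega> i > 0"
    and rad_plus: "\<forall>i\<in>Vplus. radial_sum E r \<omega> i < 0"
    and rad_zero: "\<forall>i\<in>Vzero. radial_sum E r \<omega> i = 0"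
    and sep: "\<forall>(i, j)\<in>E. \<omega> i j < 0 \<longrightarrow> tangency_deriv p r p' r' i j \<ge> 0"
    and ovl: "\<forall>(i, j)\<in>E. \<omega> i j > 0 \<longrightarrow> tangency_deriv p r p' r' i j \<le> 0"
    and r_plus: "\<forall>k\<in>Vplus. r' k \<ge> 0"
    and r_minus: "\<forall>k\<in>Vminus. r' k \<le> 0"
    and r_eq: "\<forall>k\<in>Veq. r' k = 0"
  shows "(\<forall>k\<in>Vplus \<union> Vminus. r' k = 0) \<and>
         (\<forall>(i, j)\<in>E. \<omega> i j \<noteq> 0 \<longrightarrow>
            (p i - p j) \<bullet> (p' i - p' j) = (r i + r j) * (r' i + r' j))"
proof -
  define N where "N i = {j. (i, j) \<in> E}" for i
  have finV: "finite V" and EV: "E \<subseteq> V \<times> V" and symE: "\<And>i j. (i, j) \<in> E \<Longrightarrow> (j, i) \<in> E"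
    using graph unfolding simple_graph_def by auto
  have finE: "finite E" using finV EV finite_subset by blast
  have finN: "finite (N i)" if "i \<in> V" for i
  proof -
    have "N i \<subseteq> V" using EV unfolding N_def by auto
    thus ?thesis using finV finite_subset by blast
  qed
  have ESig: "E = Sigma V N" using EV unfolding N_def by auto
  have L1: "(\<Sum>(i,j)\<in>E. g i j) = (\<Sum>i\<in>V. \<Sum>j\<in>N i. g i j)" for g :: "'v \<Rightarrow> 'v \<Rightarrow> real"
    unfolding ESig by (rule sum.Sigma[symmetric]) (use finV finN in auto)
  have L2: "(\<Sum>(i,j)\<in>E. g i j) = (\<Sum>(i,j)\<in>E. g j i)" for g :: "'v \<Rightarrow> 'v \<Rightarrow> real"
    by (rule sum.reindex_bij_witness[of E prod.swap prod.swap]) (auto intro: symE)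
  have symw: "\<And>i j. \<omega> i j = \<omega> j i" and eq: "\<And>i. i \<in> V \<Longrightarrow> (\<Sum>j\<in>N i. \<omega> i j *\<^sub>R (p i - p j)) = 0"
    using stress unfolding equilibrium_stress_def N_def by auto
  define rad where "rad i = radial_sum E r \<omega> i" for i
  have radN: "rad i = (\<Sum>j\<in>N i. \<omega> i j * (r i + r j))" for i
    unfolding rad_def radial_sum_def N_def by simp
  have S1: "(\<Sum>(i,j)\<in>E. \<omega> i j * ((p i - p j) \<bullet> p' i)) = 0"
  proof -
    have "(\<Sum>(i,j)\<in>E. \<omega> i j * ((p i - p j) \<bullet> p' i)) = (\<Sum>i\<in>V. \<Sum>j\<in>N i. \<omega> i j * ((p i - p j) \<bullet> p' i))"
      by (rule L1)
    also have "\<dots> = (\<Sum>i\<in>V. (\<Sum>j\<in>N i. \<omega> i j *\<^sub>R (p i - p j)) \<bullet> p' i)"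
      by (simp add: inner_sum_left)
    also have "\<dots> = 0" using eq by simp
    finally show ?thesis .
  qed
  have S2: "(\<Sum>(i,j)\<in>E. \<omega> i j * ((p i - p j) \<bullet> p' j)) = 0"
  proof -
    have "(\<Sum>(i,j)\<in>E. \<omega> i j * ((p i - p j) \<bullet> p' j)) = (\<Sum>(i,j)\<in>E. \<omega> j i * ((p j - p i) \<bullet> p' i))"
      by (rule L2)
    also have "\<dots> = (\<Sum>(i,j)\<in>E. - (\<omega> i j * ((p i - p j) \<bullet> p' i)))"
      proof (rule sum.cong, simp, clarify)
      fix a b
      have "(p b - p a) \<bullet> p' a = - ((p a - p b) \<bullet> p' a)" by (simp add: inner_diff_left)
      thus "\<omega> b a * ((p b - p a) \<bullet> p' a) = - (\<omega> a b * ((p a - p b) \<bullet> p' a))"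
        using symw[of b a] by simp
    qed
    also have "\<dots> = 0" using S1 by (simp add: sum_negf case_prod_unfold)
    finally show ?thesis .
  qed
  have R1: "(\<Sum>(i,j)\<in>E. \<omega> i j * (r i + r j) * r' i) = (\<Sum>i\<in>V. r' i * rad i)"
  proof -
    have "(\<Sum>(i,j)\<in>E. \<omega> i j * (r i + r j) * r' i) = (\<Sum>i\<in>V. \<Sum>j\<in>N i. \<omega> i j * (r i + r j) * r' i)"
      by (rule L1)
    also have "\<dots> = (\<Sum>i\<in>V. r' i * rad i)"
      by (simp add: radN sum_distrib_left mult.commute mult.left_commute)
    finally show ?thesis .
  qed
  have R2: "(\<Sum>(i,j)\<in>E. \<omega> i j * (r i + r j) * r' j) = (\<Sum>i\<in>V. r' i * rad i)"
  proof -
    have "(\<Sum>(i,j)\<in>E. \<omega> i j * (r i + r j) * r' j) = (\<Sum>(i,j)\<in>E. \<omega> j i * (r j + r i) * r' i)"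
      by (rule L2)
    also have "\<dots> = (\<Sum>(i,j)\<in>E. \<omega> i j * (r i + r j) * r' i)"
      proof (rule sum.cong, simp, clarify)
      fix a b
      show "\<omega> b a * (r b + r a) * r' a = \<omega> a b * (r a + r b) * r' a"
        using symw[of b a] by (simp add: add.commute)
    qed
    finally show ?thesis using R1 by simp
  qed
  define T where "T i j = tangency_deriv p r p' r' i j" for i j
  have Texp: "\<omega> i j * T i j = \<omega> i j * ((p i - p j) \<bullet> p' i) - \<omega> i j * ((p i - p j) \<bullet> p' j)
      - \<omega> i j * (r i + r j) * r' i - \<omega> i j * (r i + r j) * r' j" for i j
    unfolding T_def tangency_deriv_def by (simp add: inner_diff_right algebra_simps)
  have S: "(\<Sum>(i,j)\<in>E. \<omega> i j * T i j) = - 2 * (\<Sum>i\<in>V. r' i * rad i)"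
  proof -
    have "(\<Sum>(i,j)\<in>E. \<omega> i j * T i j) = (\<Sum>(i,j)\<in>E. \<omega> i j * ((p i - p j) \<bullet> p' i))
      - (\<Sum>(i,j)\<in>E. \<omega> i j * ((p i - p j) \<bullet> p' j))
      - (\<Sum>(i,j)\<in>E. \<omega> i j * (r i + r j) * r' i) - (\<Sum>(i,j)\<in>E. \<omega> i j * (r i + r j) * r' j)"
      by (simp add: Texp case_prod_unfold sum_subtractf)
    thus ?thesis using S1 S2 R1 R2 by simp
  qed
  have Tnp: "\<omega> i j * T i j \<le> 0" if "(i,j) \<in> E" for i j
  proof -
    have a: "\<omega> i j < 0 \<Longrightarrow> T i j \<ge> 0" using sep that unfolding T_def by auto
    have b: "\<omega> i j > 0 \<Longrightarrow> T i j \<le> 0" using ovl that unfolding T_def by auto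
    show ?thesis
    proof (cases "\<omega> i j < 0")
      case True
      hence "T i j \<ge> 0" using a by simp
      thus ?thesis using True by (simp add: mult_nonpos_nonneg)
    next
      case False
      hence "\<omega> i j \<ge> 0" by simp
      moreover have "\<omega> i j = 0 \<or> T i j \<le> 0" using b calculation by force
      ultimately show ?thesis by (auto simp: mult_nonneg_nonpos)
    qed
  qed
  have Rnp: "r' i * rad i \<le> 0" if "i \<in> V" for i
  proof -
    have "i \<in> Vplus \<or> i \<in> Vminus \<or> i \<in> Veq \<or> i \<in> Vzero" using that partition(1) by auto
    thus ?thesis
      using rad_plus rad_minus rad_zero r_plus r_minus r_eq unfolding rad_def
      by (metis less_imp_le mult_nonneg_nonpos mult_nonpos_nonneg mult_zero_left mult_zero_right order_refl)
  qed
  have sumT: "(\<Sum>(i,j)\<in>E. \<omega> i j * T i j) \<le> 0"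
    using Tnp by (intro sum_nonpos) auto
  have sumR: "(\<Sum>i\<in>V. r' i * rad i) \<le> 0"
    using Rnp by (intro sum_nonpos) auto
  have sumR0: "(\<Sum>i\<in>V. - (r' i * rad i)) = 0"
    using sumT sumR S by (simp add: sum_negf)
  have allR: "\<forall>i\<in>V. - (r' i * rad i) = 0"
    using sum_nonneg_eq_0_iff[OF finV, of "\<lambda>i. - (r' i * rad i)"] Rnp sumR0 by auto
  have sumT0: "(\<Sum>x\<in>E. - (case x of (i,j) \<Rightarrow> \<omega> i j * T i j)) = 0"
    using sumT sumR S by (simp add: sum_negf)
  have allT: "\<forall>x\<in>E. - (case x of (i,j) \<Rightarrow> \<omega> i j * T i j) = 0"
  proof -
    have nn: "\<forall>x\<in>E. 0 \<le> - (case x of (i,j) \<Rightarrow> \<omega> i j * T i j)" using Tnp by fastforce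
    show ?thesis
      using sum_nonneg_eq_0_iff[OF finE, of "\<lambda>x. - (case x of (i,j) \<Rightarrow> \<omega> i j * T i j)"] nn sumT0 by blast
  qed
  show ?thesis
  proof
    show "\<forall>k\<in>Vplus \<union> Vminus. r' k = 0"
    proof
      fix k assume k: "k \<in> Vplus \<union> Vminus"
      hence "k \<in> V" using partition(1) by auto
      hence "r' k * rad k = 0" using allR by auto
      moreover have "rad k \<noteq> 0" using k rad_plus rad_minus unfolding rad_def by force
      ultimately show "r' k = 0" by simp
    qed
  next
    show "\<forall>(i, j)\<in>E. \<omega> i j \<noteq> 0 \<longrightarrow> (p i - p j) \<bullet> (p' i - p' j) = (r i + r j) * (r' i + r' j)"
    proof (intro ballI impI, clarify)
      fix i j assume e: "(i,j) \<in> E" and w: "\<omega> i j \<noteq> 0"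
      have "\<omega> i j * T i j = 0" using allT e by (fastforce simp del: mult_eq_0_iff)
      hence "T i j = 0" using w by simp
      thus "(p i - p j) \<bullet> (p' i - p' j) = (r i + r j) * (r' i + r' j)"
        unfolding T_def tangency_deriv_def by simp
    qed
  qed
qed

end
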